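(* For every time $t$, let $C_t=\mathcal{K}-b_t$ and let $g_t(\theta)=(\mathbb{1}\{y_t\le b_t^{\alpha}+\theta^{\alpha}\}-\alpha)_{\alpha\in\mathcal{A}}$ be the gradient of the MultiQT loss $\ell_t(\theta)=\sum_{\alpha\in\mathcal{A}}\rho_\alpha(b_t^{\alpha}+\theta^{\alpha},y_t)$. Then $-g_t(\theta)\in T_{C_t}(\theta)$ for all $\theta$ on the boundary of $C_t$; i.e., $(\ell_t,C_t)$ satisfies inward flow.
   Context: $\mathcal{A}=\{\alpha_1<\dots<\alpha_m\}\subset(0,1)$; $\mathcal{K}=\{x\in\mathbb{R}^m:x_1\le\dots\le x_m\}$; base forecasts $b_t\in\mathcal{K}$, outcomes $y_t\in\mathbb{R}$; $C-v=\{x-v:x\in C\}$. Quantile loss $\rho_\alpha(\hat y,y)=\alpha|y-\hat y|$ if $y\ge\hat y$ and $(1-\alpha)|y-\hat y|$ otherwise. Tangent cone $T_C(x)=\mathrm{cl}\{y:\exists\beta>0,\ x+\varepsilon y\in C\ \forall\varepsilon\in[0,\beta]\}$. *)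

theory Defs
  imports "HOL-Analysis.Analysis"
begin

text \<open>Quantile levels are indexed by a finite linearly ordered type 'n (so m = CARD('n));
  vectors in R^m are elements of real^'n.\<close>

definition monotone_cone :: "(real ^ 'n::{finite,linorder}) set" where
  "monotone_cone = {x. \<forall>i j. i \<le> j \<longrightarrow> x $ i \<le> x $ j}"

definition set_shift :: "('a::ab_group_add) set \<Rightarrow> 'a \<Rightarrow> 'a set" where
  "set_shift C v = {x - v | x. x \<in> C}"

definition tangent_cone :: "('a::real_normed_vector) set \<Rightarrow> 'a \<Rightarrow> 'a set" where
  "tangent_cone C x = closure {y. \<exists>\<beta>>0. \<forall>\<epsilon>\<in>{0..\<beta>}. x + \<epsilon> *\<^sub>R y \<in> C}"

definition quantile_loss :: "real \<Rightarrow> real \<Rightarrow> real \<Rightarrow> real" where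
  "quantile_loss \<alpha> yhat y = (if y \<ge> yhat then \<alpha> * \<bar>y - yhat\<bar> else (1 - \<alpha>) * \<bar>y - yhat\<bar>)"

definition multiqt_loss :: "('n::{finite,linorder} \<Rightarrow> real) \<Rightarrow> real ^ ('n::{finite,linorder}) \<Rightarrow> real \<Rightarrow> real ^ ('n::{finite,linorder}) \<Rightarrow> real" where
  "multiqt_loss \<alpha> b y \<theta> = (\<Sum>i\<in>UNIV. quantile_loss (\<alpha> i) (b $ i + \<theta> $ i) y)"

definition multiqt_grad :: "('n::{finite,linorder} \<Rightarrow> real) \<Rightarrow> real ^ ('n::{finite,linorder}) \<Rightarrow> real \<Rightarrow> real ^ ('n::{finite,linorder}) \<Rightarrow> real ^ ('n::{finite,linorder})" where
  "multiqt_grad \<alpha> b y \<theta> = (\<chi> i. (if y \<le> b $ i + \<theta> $ i then 1 else 0) - \<alpha> i)"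

end

theory Submission
  imports Defs
begin

lemma closed_half: fixes i j :: "'n::{finite,linorder}" shows "closed {x::real^'n::{finite,linorder}. i \<le> j \<longrightarrow> x $ i \<le> x $ j}"
proof (cases "i \<le> j")
  case True
  have "closed {x::real^'n::{finite,linorder}. x $ i \<le> x $ j}"
    by (intro closed_Collect_le continuous_on_component continuous_on_id)
  thus ?thesis using True by simp
next
  case False
  thus ?thesis by simp
qed

lemma closed_mc: "closed (monotone_cone :: (real ^ 'n::{finite,linorder}) set)"
proof -
  have "(monotone_cone :: (real ^ 'n::{finite,linorder}) set) = (\<Inter>i. \<Inter>j. {x. i \<le> j \<longrightarrow> x $ i \<le> x $ j})"
    unfolding monotone_cone_def by (simp add: set_eq_iff)
  moreover have "closed (\<Inter>i. \<Inter>j. {x::real^'n::{finite,linorder}. i \<le> j \<longrightarrow> x $ i \<le> x $ j})"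
    by (intro closed_INT ballI closed_half)
  ultimately show ?thesis by simp
qed

lemma shift_eq: "set_shift C v = (\<lambda>x. (- v) + x) ` C"
  unfolding set_shift_def by auto

lemma mem_shift: "(z::real^'n::{finite,linorder}) \<in> set_shift monotone_cone b \<longleftrightarrow> b + z \<in> monotone_cone"
  proof
  assume "z \<in> set_shift monotone_cone b"
  then obtain x where "x \<in> monotone_cone" "z = x - b" unfolding set_shift_def by blast
  thus "b + z \<in> monotone_cone" by simp
next
  assume "b + z \<in> monotone_cone"
  moreover have "z = (b + z) - b" by simp
  ultimately show "z \<in> set_shift monotone_cone b" unfolding set_shift_def by blast
qed

theorem lemma2:
  fixes \<alpha> :: "'n::{finite,linorder} \<Rightarrow> real" and b \<theta> :: "real ^ ('n::{finite,linorder})" and y :: real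
  assumes "strict_mono \<alpha>"
    and "\<And>i. 0 < \<alpha> i \<and> \<alpha> i < 1"
    and "b \<in> monotone_cone"
    and "\<theta> \<in> frontier (set_shift monotone_cone b)"
  shows "- multiqt_grad \<alpha> b y \<theta> \<in> tangent_cone (set_shift monotone_cone b) \<theta>"
proof -
  let ?C = "set_shift monotone_cone b"
  have cl: "closed ?C" unfolding shift_eq by (rule closed_translation[OF closed_mc])
  have "\<theta> \<in> ?C" using assms(4) cl frontier_subset_closed by blast
  hence xK: "b + \<theta> \<in> monotone_cone" by (simp add: mem_shift)
  define x where "x = b + \<theta>"
  define d where "d = - multiqt_grad \<alpha> b y \<theta>"
  have dc: "d $ i = \<alpha> i - (if y \<le> x $ i then 1 else 0)" for i
    unfolding d_def x_def multiqt_grad_def by simp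
  have xm: "i \<le> j \<Longrightarrow> x $ i \<le> x $ j" for i j using xK unfolding x_def monotone_cone_def by auto
  define P where "P = {(i,j). x $ i < x $ j}"
  define S where "S = (\<lambda>(i,j). (x $ j - x $ i) / 2) ` P"
  have finS: "finite S" unfolding S_def P_def by simp
  define \<beta> where "\<beta> = Min (insert 1 S)"
  have "\<forall>s\<in>S. s > 0" unfolding S_def P_def by auto
  hence bpos: "\<beta> > 0" unfolding \<beta>_def using finS by (simp add: Min_gr_iff)
  have ble: "\<beta> \<le> (x $ j - x $ i) / 2" if "x $ i < x $ j" for i j
  proof -
    have "(x $ j - x $ i) / 2 \<in> S" unfolding S_def P_def using that
      by (intro image_eqI[where x="(i,j)"]) auto
    thus ?thesis unfolding \<beta>_def using finS by (intro Min_le) auto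
  qed
  have "\<theta> + \<epsilon> *\<^sub>R d \<in> ?C" if e: "\<epsilon> \<in> {0..\<beta>}" for \<epsilon>
  proof -
    have "(x + \<epsilon> *\<^sub>R d) $ i \<le> (x + \<epsilon> *\<^sub>R d) $ j" if ij: "i \<le> j" for i j
    proof (cases "x $ i < x $ j")
      case True
      have "d $ i - d $ j \<le> 2" using assms(2)[of i] assms(2)[of j] by (simp add: dc)
      hence "\<epsilon> * (d $ i - d $ j) \<le> \<epsilon> * 2" using e by (intro mult_left_mono) auto
      moreover have "\<epsilon> * 2 \<le> x $ j - x $ i" using ble[OF True] e by auto
      ultimately show ?thesis by (simp add: algebra_simps)
    next
      case False
      hence eq: "x $ i = x $ j" using xm[OF ij] by auto
      have "\<alpha> i \<le> \<alpha> j" using assms(1) ij by (simp add: strict_mono_less_eq)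
      hence "d $ i \<le> d $ j" by (simp add: dc eq)
      thus ?thesis using e eq by (simp add: mult_left_mono)
    qed
    hence "x + \<epsilon> *\<^sub>R d \<in> monotone_cone" unfolding monotone_cone_def by auto
    thus ?thesis by (simp add: mem_shift x_def add.assoc)
  qed
  hence "d \<in> {y. \<exists>\<beta>>0. \<forall>\<epsilon>\<in>{0..\<beta>}. \<theta> + \<epsilon> *\<^sub>R y \<in> ?C}" using bpos by (intro CollectI exI[where x=\<beta>] conjI ballI) auto
  hence "d \<in> closure {y. \<exists>\<beta>>0. \<forall>\<epsilon>\<in>{0..\<beta>}. \<theta> + \<epsilon> *\<^sub>R y \<in> ?C}"
    by (rule subsetD[OF closure_subset])
  thus ?thesis unfolding tangent_cone_def d_def .
qed

end
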